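(* Let $G=K_{s}^{t}$ with $2\leq t\leq s$ and $n=s+t$, and let $P_{D}(\lambda)=\det(\lambda I-D(G))$. If $s\geq t+1$, then $$P_{D}(\lambda)=(\lambda+1)^{s-t-1}(\lambda+2-\sqrt{2})^{t-1}(\lambda+2+\sqrt{2})^{t-1}\big[\lambda^{3}+(5-s-3t)\lambda^{2}+(6-4s-2t-st)\lambda+2-2s-st\big].$$ If $s=t$, then $$P_{D}(\lambda)=(\lambda+2-\sqrt{2})^{t-1}(\lambda+2+\sqrt{2})^{t-1}\big[\lambda^{2}+(4-4t)\lambda+2-2t-t^{2}\big].$$
   Context: $D(G)$ is the distance matrix of $G$. $K_{s}^{t}$ ($2\le t\le s$) denotes the graph on $n=s+t$ vertices obtained from the complete graph $K_s$ by attaching a pendant edge (a new vertex of degree 1) to each of $t$ distinct vertices of $K_s$. *)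

theory Defs
  imports "Jordan_Normal_Form.Determinant"
begin

text \<open>Vertices of K_s^t are 0..s+t-1: vertices 0..s-1 form the clique K_s, and for
 each i < t the vertex s+i is a pendant vertex attached to vertex i.\<close>
definition Kst_adj :: "nat \<Rightarrow> nat \<Rightarrow> nat \<Rightarrow> nat \<Rightarrow> bool" where
  "Kst_adj s t u v \<longleftrightarrow> u \<noteq> v \<and>
     ((u < s \<and> v < s) \<or> (u < t \<and> v = s + u) \<or> (v < t \<and> u = s + v))"

definition walk :: "(nat \<Rightarrow> nat \<Rightarrow> bool) \<Rightarrow> nat \<Rightarrow> nat \<Rightarrow> nat \<Rightarrow> bool" where
  "walk E u v k \<longleftrightarrow> (\<exists>p::nat list. length p = Suc k \<and> p ! 0 = u \<and> p ! k = v \<and>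
      (\<forall>i<k. E (p ! i) (p ! Suc i)))"

definition gdist :: "(nat \<Rightarrow> nat \<Rightarrow> bool) \<Rightarrow> nat \<Rightarrow> nat \<Rightarrow> nat" where
  "gdist E u v = (LEAST k. walk E u v k)"

definition dist_mat_Kst :: "nat \<Rightarrow> nat \<Rightarrow> real mat" where
  "dist_mat_Kst s t = mat (s + t) (s + t) (\<lambda>(i, j). real (gdist (Kst_adj s t) i j))"

definition PD_Kst :: "nat \<Rightarrow> nat \<Rightarrow> real \<Rightarrow> real" where
  "PD_Kst s t x = det (x \<cdot>\<^sub>m 1\<^sub>m (s + t) - dist_mat_Kst s t)"

end

theory Submission imports Defs begin
definition cls :: "nat \<Rightarrow> nat \<Rightarrow> nat" where "cls s u = (if u < s then u else u - s)"
definition dd :: "nat \<Rightarrow> nat \<Rightarrow> nat \<Rightarrow> nat" where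
  "dd s u v = (if u = v then 0 else (if cls s u \<noteq> cls s v then 1 else 0) + (if s \<le> u then 1 else 0) + (if s \<le> v then 1 else 0))"

lemma walk0: "walk E u u 0"
  unfolding walk_def by (rule exI[of _ "[u]"]) auto

lemma walk_snoc: assumes "walk E u v k" "E v w" shows "walk E u w (Suc k)"
proof -
  from assms(1) obtain p where p: "length p = Suc k" "p ! 0 = u" "p ! k = v" "\<forall>i<k. E (p ! i) (p ! Suc i)"
    unfolding walk_def by blast
  show ?thesis unfolding walk_def
  proof (rule exI[of _ "p @ [w]"], intro conjI allI impI)
    show "length (p @ [w]) = Suc (Suc k)" using p by simp
    show "(p @ [w]) ! 0 = u" using p by (simp add: nth_append)
    show "(p @ [w]) ! Suc k = w" using p by (simp add: nth_append)
    fix i assume "i < Suc k"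
    then show "E ((p @ [w]) ! i) ((p @ [w]) ! Suc i)"
      using p assms(2) by (cases "i < k") (auto simp: nth_append less_Suc_eq)
  qed
qed

lemma walk_Suc_D: assumes "walk E u v (Suc k)" shows "\<exists>w. walk E u w k \<and> E w v"
proof -
  from assms obtain p where p: "length p = Suc (Suc k)" "p ! 0 = u" "p ! Suc k = v" "\<forall>i<Suc k. E (p ! i) (p ! Suc i)"
    unfolding walk_def by blast
  have "walk E u (p ! k) k" unfolding walk_def
    by (rule exI[of _ "take (Suc k) p"]) (use p in auto)
  moreover have "E (p ! k) v" using p by auto
  ultimately show ?thesis by blast
qed

lemma dd_tri: "dd s u v \<le> dd s u w + dd s w v"
proof (cases "u = v \<or> w = u \<or> w = v")
  case True
  then show ?thesis by (auto simp: dd_def)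
next
  case False
  have "(if cls s u \<noteq> cls s v then 1 else 0::nat) \<le> (if cls s u \<noteq> cls s w then 1 else 0) + (if cls s w \<noteq> cls s v then 1 else 0)"
    by auto
  then show ?thesis using False unfolding dd_def by simp
qed

lemma dd_adj: "Kst_adj s t w v \<Longrightarrow> t \<le> s \<Longrightarrow> dd s w v \<le> 1"
  unfolding Kst_adj_def by (elim conjE disjE) (auto simp: dd_def cls_def)

lemma walk_lower: "walk (Kst_adj s t) u v k \<Longrightarrow> t \<le> s \<Longrightarrow> dd s u v \<le> k"
proof (induction k arbitrary: v)
  case 0
  then show ?case unfolding walk_def dd_def by auto
next
  case (Suc k)
  then obtain w where w: "walk (Kst_adj s t) u w k" "Kst_adj s t w v" using walk_Suc_D by blast
  have "dd s u v \<le> dd s u w + dd s w v" by (rule dd_tri)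
  also have "\<dots> \<le> k + 1" using Suc.IH[OF w(1) Suc.prems(2)] dd_adj[OF w(2) Suc.prems(2)] by simp
  finally show ?case by simp
qed

lemma walk1: "E u v \<Longrightarrow> walk E u v (Suc 0)"
  using walk_snoc[OF walk0] by metis

lemma walk_upper: assumes "u < s + t" "v < s + t" "t \<le> s" shows "walk (Kst_adj s t) u v (dd s u v)"
proof -
  let ?E = "Kst_adj s t"
  consider "u = v" | "u \<noteq> v" "u < s" "v < s" | "u \<noteq> v" "u < s" "s \<le> v" | "u \<noteq> v" "s \<le> u" "v < s"
    | "u \<noteq> v" "s \<le> u" "s \<le> v" by linarith
  then show ?thesis
  proof cases
    case 1 then show ?thesis by (simp add: dd_def walk0)
  next
    case 2
    have "Kst_adj s t u v" using 2 unfolding Kst_adj_def by auto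
    then show ?thesis using 2 walk1 by (simp add: dd_def cls_def)
  next
    case 3
    show ?thesis
    proof (cases "u = v - s")
      case True
      then have "?E u v" using 3 assms unfolding Kst_adj_def by auto
      then show ?thesis using 3 True by (simp add: dd_def cls_def walk1)
    next
      case False
      have e1: "?E u (v - s)" using 3 False assms unfolding Kst_adj_def by auto
      have e2: "?E (v - s) v" using 3 False assms unfolding Kst_adj_def by auto
      have "walk ?E u v (Suc (Suc 0))" using walk_snoc[OF walk1[of ?E, OF e1] e2] by simp
      then show ?thesis using 3 False by (simp add: dd_def cls_def)
    qed
  next
    case 4
    show ?thesis
    proof (cases "v = u - s")
      case True
      then have "?E u v" using 4 assms unfolding Kst_adj_def by auto
      then show ?thesis using 4 True by (simp add: dd_def cls_def walk1)
    next
      case False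
      have e1: "?E u (u - s)" using 4 False assms unfolding Kst_adj_def by auto
      have e2: "?E (u - s) v" using 4 False assms unfolding Kst_adj_def by auto
      have "walk ?E u v (Suc (Suc 0))" using walk_snoc[OF walk1[of ?E, OF e1] e2] by simp
      then show ?thesis using 4 False by (simp add: dd_def cls_def)
    qed
  next
    case 5
    have e1: "?E u (u - s)" using 5 assms unfolding Kst_adj_def by auto
    have e2: "?E (u - s) (v - s)" using 5 assms unfolding Kst_adj_def by auto
    have e3: "?E (v - s) v" using 5 assms unfolding Kst_adj_def by auto
    have "walk ?E u v (Suc (Suc (Suc 0)))" using walk_snoc[OF walk_snoc[OF walk1[of ?E, OF e1] e2] e3] by simp
    moreover have "u - s \<noteq> v - s" using 5 by auto
    ultimately show ?thesis using 5 assms by (simp add: dd_def cls_def)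
  qed
qed

lemma gdist_eq: assumes "u < s + t" "v < s + t" "t \<le> s" shows "gdist (Kst_adj s t) u v = dd s u v"
  unfolding gdist_def
  by (rule Least_equality) (use walk_upper[OF assms] walk_lower assms(3) in auto)

lemma det2: assumes A: "A \<in> carrier_mat 2 2"
  shows "det A = A $$ (0,0) * A $$ (1,1) - A $$ (0,1) * A $$ (1,0)"
proof -
  have "det A = (\<Sum>i<2. A $$ (i,0) * cofactor A i 0)"
    by (rule laplace_expansion_column[OF A]) simp
  also have "\<dots> = A $$ (0,0) * cofactor A 0 0 + A $$ (1,0) * cofactor A 1 0"
    by (simp add: numeral_2_eq_2)
  also have "cofactor A 0 0 = A $$ (1,1)"
    unfolding cofactor_def using A by (subst det_single) (auto simp: mat_delete_def numeral_2_eq_2)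
  also have "cofactor A 1 0 = - A $$ (0,1)"
    unfolding cofactor_def using A by (subst det_single) (auto simp: mat_delete_def numeral_2_eq_2)
  finally show ?thesis by (simp add: algebra_simps)
qed

lemma det3: assumes A: "A \<in> carrier_mat 3 3"
  shows "det A = A $$ (0,0) * (A $$ (1,1) * A $$ (2,2) - A $$ (1,2) * A $$ (2,1))
     - A $$ (1,0) * (A $$ (0,1) * A $$ (2,2) - A $$ (0,2) * A $$ (2,1))
     + A $$ (2,0) * (A $$ (0,1) * A $$ (1,2) - A $$ (0,2) * A $$ (1,1))"
proof -
  have "det A = (\<Sum>i<3. A $$ (i,0) * cofactor A i 0)"
    by (rule laplace_expansion_column[OF A]) simp
  also have "\<dots> = A $$ (0,0) * cofactor A 0 0 + A $$ (1,0) * cofactor A 1 0 + A $$ (2,0) * cofactor A 2 0"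
    by (simp add: numeral_3_eq_3 numeral_2_eq_2)
  also have "cofactor A 0 0 = A $$ (1,1) * A $$ (2,2) - A $$ (1,2) * A $$ (2,1)"
    unfolding cofactor_def using A by (subst det2) (auto simp: mat_delete_def numeral_2_eq_2)
  also have "cofactor A 1 0 = - (A $$ (0,1) * A $$ (2,2) - A $$ (0,2) * A $$ (2,1))"
    unfolding cofactor_def using A by (subst det2) (auto simp: mat_delete_def numeral_2_eq_2)
  also have "cofactor A 2 0 = A $$ (0,1) * A $$ (1,2) - A $$ (0,2) * A $$ (1,1)"
    unfolding cofactor_def using A by (subst det2) (auto simp: mat_delete_def numeral_2_eq_2)
  finally show ?thesis by (simp add: algebra_simps)
qed

definition Me :: "nat \<Rightarrow> real \<Rightarrow> nat \<Rightarrow> nat \<Rightarrow> real" where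
  "Me s x i j = (if i = j then x else 0) - real (dd s i j)"

definition del :: "nat \<Rightarrow> nat \<Rightarrow> real" where "del a w = (if w = a then 1 else 0)"

lemma PD_eq: assumes "t \<le> s"
  shows "PD_Kst s t x = det (mat (s+t) (s+t) (\<lambda>(i,j). Me s x i j))"
  unfolding PD_Kst_def
  by (rule arg_cong[of _ _ det], rule eq_matI)
     (auto simp: dist_mat_Kst_def Me_def gdist_eq assms)

lemma sum_del: "a < n \<Longrightarrow> (\<Sum>w<n. f w * del a w) = f a"
  by (simp add: del_def sum.delta' if_distrib[of "\<lambda>z. f _ * z"] cong: if_cong)

lemma sum_del_set: "finite X \<Longrightarrow> (\<Sum>k\<in>X. del a k) = (if a \<in> X then 1 else 0)"
  by (simp add: del_def)

locale K =
  fixes s t :: nat and x :: real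
  assumes t2: "2 \<le> t" and ts: "t < s"
begin

abbreviation "n \<equiv> s + t"
abbreviation "q \<equiv> x^2 + 4*x + 2"

definition "Mv = mat n n (\<lambda>(i,j). Me s x i j)"

definition "Fm = mat n n (\<lambda>(i,j). if i = t-1 then (if j < t then 1 else 0)
   else if i = s-1 then (if t \<le> j \<and> j < s then 1 else 0)
   else if i = s+t-1 then (if s \<le> j then 1 else 0) else del i j)"

definition "Rm = mat n n (\<lambda>(i,j). if j < t-1 then del j i - del (j+1) i - (x+1)*(del (s+j) i - del (s+j+1) i)
   else if t \<le> j \<and> j < s-1 then del j i - del (j+1) i
   else if s \<le> j \<and> j < s+t-1 then del j i - del (j+1) i else del j i)"

lemma L1: assumes "i < n" "c < t - 1"
  shows "Me s x i c - Me s x i (c+1) - (x+1)*(Me s x i (s+c) - Me s x i (s+c+1)) = - q * (del (s+c) i - del (s+c+1) i)"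
  using assms ts unfolding Me_def dd_def cls_def del_def by (auto simp: algebra_simps power2_eq_square)

lemma L2: assumes "i < n" "t \<le> c" "c < s - 1"
  shows "Me s x i c - Me s x i (c+1) = (x+1) * (del c i - del (c+1) i)"
  using assms ts unfolding Me_def dd_def cls_def del_def by (auto simp: algebra_simps)

lemma L3: assumes "i < n" "s \<le> c" "c < s + t - 1"
  shows "Me s x i c - Me s x i (c+1) = del (c-s) i - del (c-s+1) i + (x+3) * (del c i - del (c+1) i)"
proof -
  have e: "Suc c - s = Suc (c - s)" using assms by auto
  show ?thesis using assms ts e unfolding Me_def dd_def cls_def del_def
    apply (auto simp: algebra_simps)
    apply linarith
    done
qed

end

lemma sum_del2: "a < n \<Longrightarrow> (\<Sum>w<n. del a w * f w) = f a"
  using sum_del[of a n f] by (simp add: mult.commute)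

lemma sumA: "a < n \<Longrightarrow> b < n \<Longrightarrow> (\<Sum>w<n. f w * (del a w - del b w)) = f a - f b"
  by (simp add: right_diff_distrib sum_subtractf sum_del)

lemma sumB: assumes "a < n" "b < n" "d < n" "e < n"
  shows "(\<Sum>w<n. f w * (del a w - del b w - k*(del d w - del e w))) = f a - f b - k*(f d - f e)"
proof -
  have "(\<Sum>w<n. f w * (del a w - del b w - k*(del d w - del e w))) = (\<Sum>w<n. f w * (del a w - del b w) - k * (f w * (del d w - del e w)))"
    by (rule sum.cong) (auto simp: algebra_simps)
  also have "\<dots> = (\<Sum>w<n. f w * (del a w - del b w)) - k * (\<Sum>w<n. f w * (del d w - del e w))"
    by (simp add: sum_subtractf sum_distrib_left)
  finally have "(\<Sum>w<n. f w * (del a w - del b w - k*(del d w - del e w))) = (\<Sum>w<n. f w * (del a w - del b w)) - k * (\<Sum>w<n. f w * (del d w - del e w))" .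
  then show ?thesis using assms by (simp add: sumA)
qed

lemma sum_ind: fixes g :: "nat \<Rightarrow> real" shows "finite A \<Longrightarrow> (\<Sum>k\<in>A. (if P k then 1 else 0) * g k) = sum g {k\<in>A. P k}"
  by (subst sum.inter_filter, simp, rule sum.cong, simp_all)

lemma sum_special: fixes f :: "nat \<Rightarrow> real"
  assumes "finite A" "a \<in> A" "\<And>k. k \<in> A \<Longrightarrow> k \<noteq> a \<Longrightarrow> f k = c"
  shows "sum f A = f a + (real (card A) - 1) * c"
proof -
  have "sum f A = f a + sum f (A - {a})" using assms by (simp add: sum.remove)
  also have "sum f (A - {a}) = (\<Sum>k\<in>A-{a}. c)" by (rule sum.cong) (use assms in auto)
  also have "\<dots> = (real (card A) - 1) * c"
  proof -
    have "0 < card A" using assms card_gt_0_iff by blast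
    then show ?thesis using assms by (simp add: card_Diff_singleton of_nat_diff)
  qed
  finally show ?thesis .
qed

lemma sum_const': fixes f :: "nat \<Rightarrow> real"
  assumes "\<And>k. k \<in> A \<Longrightarrow> f k = c"
  shows "sum f A = real (card A) * c"
  using assms by simp

context K begin

lemma carr: "Mv \<in> carrier_mat n n" "Fm \<in> carrier_mat n n" "Rm \<in> carrier_mat n n"
  by (auto simp: Mv_def Fm_def Rm_def)

definition "Hf i c = (if c < t-1 then -q*(del (s+c) i - del (s+c+1) i)
   else if t \<le> c \<and> c < s-1 then (x+1)*(del c i - del (c+1) i)
   else if s \<le> c \<and> c < s+t-1 then del (c-s) i - del (c-s+1) i + (x+3)*(del c i - del (c+1) i)
   else Me s x i c)"

lemma H: assumes i: "i < n" and c: "c < n"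
  shows "(Mv * Rm) $$ (i,c) = Hf i c"
proof -
  have e: "(Mv*Rm)$$(i,c) = (\<Sum>w<n. Me s x i w * Rm $$ (w,c))"
    using i c by (simp add: index_mult_mat scalar_prod_def Mv_def Rm_def atLeast0LessThan)
  have R: "Rm $$ (w,c) = (if c < t-1 then del c w - del (c+1) w - (x+1)*(del (s+c) w - del (s+c+1) w)
   else if t \<le> c \<and> c < s-1 then del c w - del (c+1) w
   else if s \<le> c \<and> c < s+t-1 then del c w - del (c+1) w else del c w)" if "w < n" for w
    using that c by (simp add: Rm_def)
  have e2: "(Mv*Rm)$$(i,c) = (if c < t-1 then Me s x i c - Me s x i (c+1) - (x+1)*(Me s x i (s+c) - Me s x i (s+c+1))
   else if t \<le> c \<and> c < s-1 then Me s x i c - Me s x i (c+1)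
   else if s \<le> c \<and> c < s+t-1 then Me s x i c - Me s x i (c+1) else Me s x i c)"
  proof -
    consider "c < t-1" | "t \<le> c \<and> c < s-1" | "s \<le> c \<and> c < s+t-1" | "\<not> c < t-1" "\<not> (t \<le> c \<and> c < s-1)" "\<not> (s \<le> c \<and> c < s+t-1)" by blast
    then show ?thesis
    proof cases
      case 1
      have "(Mv*Rm)$$(i,c) = (\<Sum>w<n. Me s x i w * (del c w - del (c+1) w - (x+1)*(del (s+c) w - del (s+c+1) w)))"
        unfolding e by (rule sum.cong) (use 1 in \<open>auto simp: R\<close>)
      also have "\<dots> = Me s x i c - Me s x i (c+1) - (x+1)*(Me s x i (s+c) - Me s x i (s+c+1))"
        by (rule sumB) (use 1 ts in auto)
      finally show ?thesis using 1 by simp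
    next
      case 2
      have "(Mv*Rm)$$(i,c) = (\<Sum>w<n. Me s x i w * (del c w - del (c+1) w))"
        unfolding e by (rule sum.cong) (use 2 in \<open>auto simp: R\<close>)
      also have "\<dots> = Me s x i c - Me s x i (c+1)"
        by (rule sumA) (use 2 ts in auto)
      finally show ?thesis using 2 ts by auto
    next
      case 3
      have "(Mv*Rm)$$(i,c) = (\<Sum>w<n. Me s x i w * (del c w - del (c+1) w))"
        unfolding e by (rule sum.cong) (use 3 ts in \<open>auto simp: R\<close>)
      also have "\<dots> = Me s x i c - Me s x i (c+1)"
        by (rule sumA) (use 3 ts in auto)
      finally show ?thesis using 3 ts by auto
    next
      case 4
      have "(Mv*Rm)$$(i,c) = (\<Sum>w<n. Me s x i w * del c w)"
        unfolding e by (rule sum.cong) (use 4 in \<open>auto simp: R\<close>)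
      also have "\<dots> = Me s x i c"
        by (rule sum_del) (use c in auto)
      finally show ?thesis using 4 by auto
    qed
  qed
  show ?thesis unfolding e2 Hf_def using L1[OF i] L2[OF i] L3[OF i] by auto
qed

lemma FX: assumes X: "X \<in> carrier_mat n n" and u: "u < n" and c: "c < n"
  shows "(Fm * X) $$ (u,c) = (if u = t-1 then (\<Sum>k<t. X$$(k,c)) else if u = s-1 then (\<Sum>k\<in>{t..<s}. X$$(k,c))
     else if u = s+t-1 then (\<Sum>k\<in>{s..<n}. X$$(k,c)) else X$$(u,c))"
proof -
  have e: "(Fm*X)$$(u,c) = (\<Sum>k\<in>{0..<n}. Fm$$(u,k) * X$$(k,c))"
    using X u c by (simp add: index_mult_mat scalar_prod_def Fm_def)
  have F: "Fm$$(u,k) = (if u = t-1 then (if k < t then 1 else 0)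
   else if u = s-1 then (if t \<le> k \<and> k < s then 1 else 0)
   else if u = s+t-1 then (if s \<le> k then 1 else 0) else del u k)" if "k < n" for k
    using that u by (simp add: Fm_def)
  consider "u = t-1" | "u = s-1" | "u = s+t-1" | "u \<noteq> t-1" "u \<noteq> s-1" "u \<noteq> s+t-1" by blast
  then show ?thesis
  proof cases
    case 1
    have "(Fm*X)$$(u,c) = (\<Sum>k\<in>{0..<n}. (if k < t then 1 else 0) * X$$(k,c))"
      unfolding e by (rule sum.cong) (use 1 ts t2 u in \<open>auto simp: Fm_def\<close>)
    also have "\<dots> = (\<Sum>k\<in>{k\<in>{0..<n}. k < t}. X$$(k,c))" by (rule sum_ind) auto
    also have "{k\<in>{0..<n}. k < t} = {..<t}" by auto
    finally show ?thesis using 1 by simp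
  next
    case 2
    have "(Fm*X)$$(u,c) = (\<Sum>k\<in>{0..<n}. (if t \<le> k \<and> k < s then 1 else 0) * X$$(k,c))"
      unfolding e by (rule sum.cong) (use 2 ts t2 u in \<open>auto simp: Fm_def\<close>)
    also have "\<dots> = (\<Sum>k\<in>{k\<in>{0..<n}. t \<le> k \<and> k < s}. X$$(k,c))" by (rule sum_ind) auto
    also have "{k\<in>{0..<n}. t \<le> k \<and> k < s} = {t..<s}" by auto
    finally show ?thesis using 2 ts t2 by simp
  next
    case 3
    have "(Fm*X)$$(u,c) = (\<Sum>k\<in>{0..<n}. (if s \<le> k then 1 else 0) * X$$(k,c))"
      unfolding e by (rule sum.cong) (use 3 ts t2 u in \<open>auto simp: Fm_def\<close>)
    also have "\<dots> = (\<Sum>k\<in>{k\<in>{0..<n}. s \<le> k}. X$$(k,c))" by (rule sum_ind) auto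
    also have "{k\<in>{0..<n}. s \<le> k} = {s..<n}" by auto
    finally show ?thesis using 3 ts t2 by simp
  next
    case 4
    have "(Fm*X)$$(u,c) = (\<Sum>k<n. X$$(k,c) * del u k)"
      unfolding e atLeast0LessThan by (rule sum.cong) (use 4 u in \<open>auto simp: Fm_def mult.commute\<close>)
    also have "\<dots> = X$$(u,c)" by (rule sum_del[OF u])
    finally show ?thesis using 4 by simp
  qed
qed

definition "N = Fm * (Mv * Rm)"

lemma Nent: assumes u: "u < n" and c: "c < n"
  shows "N $$ (u,c) = (if u = t-1 then (\<Sum>k<t. Hf k c) else if u = s-1 then (\<Sum>k\<in>{t..<s}. Hf k c)
     else if u = s+t-1 then (\<Sum>k\<in>{s..<n}. Hf k c) else Hf u c)"
proof -
  have X: "Mv * Rm \<in> carrier_mat n n" using carr by auto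
  show ?thesis unfolding N_def FX[OF X u c] using u c ts
    by (auto simp: H intro!: sum.cong)
qed

lemma RS0: assumes c: "c < n" "c \<noteq> t-1" "c \<noteq> s-1" "c \<noteq> s+t-1"
  shows "(\<Sum>k<t. Hf k c) = 0 \<and> (\<Sum>k\<in>{t..<s}. Hf k c) = 0 \<and> (\<Sum>k\<in>{s..<n}. Hf k c) = 0"
proof -
  consider "c < t-1" | "t \<le> c \<and> c < s-1" | "s \<le> c \<and> c < s+t-1" using c by linarith
  then show ?thesis
  proof cases
    case 1
    then have h: "Hf k c = -q * del (s+c) k + q * del (s+c+1) k" for k by (auto simp: Hf_def algebra_simps)
    have "Suc c < t" using 1 by linarith
    show ?thesis unfolding h using 1 ts t2 \<open>Suc c < t\<close> by (simp add: sum.distrib sum_distrib_left[symmetric] sum_del_set)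
  next
    case 2
    then have h: "Hf k c = (x+1) * del c k - (x+1) * del (c+1) k" for k by (auto simp: Hf_def algebra_simps)
    have "Suc c < s" "\<not> s \<le> c" using 2 by linarith+
    show ?thesis unfolding h using 2 ts t2 \<open>Suc c < s\<close> \<open>\<not> s \<le> c\<close> by (simp add: sum_subtractf sum_distrib_left[symmetric] sum_del_set)
  next
    case 3
    then have h: "Hf k c = del (c-s) k - del (c-s+1) k + (x+3) * del c k - (x+3) * del (c+1) k" for k using ts by (auto simp: Hf_def algebra_simps)
    have "Suc c < n" "Suc (c - s) < t" using 3 by linarith+
    show ?thesis unfolding h using 3 ts t2 \<open>Suc c < n\<close> \<open>Suc (c - s) < t\<close> by (simp add: sum_subtractf sum.distrib sum_distrib_left[symmetric] sum_del_set)
  qed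
qed

lemma HfR: "Hf k (t-1) = Me s x k (t-1)" "Hf k (s-1) = Me s x k (s-1)" "Hf k (s+t-1) = Me s x k (s+t-1)"
  using ts t2 by (auto simp: Hf_def)

lemma S1: "(\<Sum>k<t. Me s x k (t-1)) = x - (real t - 1)"
  using ts t2 by (subst sum_special[where a="t-1" and c="-1"]) (auto simp: Me_def dd_def cls_def)
lemma S2: "(\<Sum>k<t. Me s x k (s-1)) = - real t"
  using ts t2 by (subst sum_const'[where c="-1"]) (auto simp: Me_def dd_def cls_def)
lemma S3: "(\<Sum>k<t. Me s x k (s+t-1)) = - (2 * real t - 1)"
  using ts t2 by (subst sum_special[where a="t-1" and c="-2"]) (auto simp: Me_def dd_def cls_def)
lemma S4: "(\<Sum>k\<in>{t..<s}. Me s x k (t-1)) = - (real s - real t)"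
  using ts t2 by (subst sum_const'[where c="-1"]) (auto simp: Me_def dd_def cls_def of_nat_diff)
lemma S5: "(\<Sum>k\<in>{t..<s}. Me s x k (s-1)) = x - (real s - real t - 1)"
  using ts t2 by (subst sum_special[where a="s-1" and c="-1"]) (auto simp: Me_def dd_def cls_def of_nat_diff)
lemma S6: "(\<Sum>k\<in>{t..<s}. Me s x k (s+t-1)) = - 2 * (real s - real t)"
  using ts t2 by (subst sum_const'[where c="-2"]) (auto simp: Me_def dd_def cls_def of_nat_diff)
lemma S7: "(\<Sum>k\<in>{s..<n}. Me s x k (t-1)) = - (2 * real t - 1)"
  using ts t2 by (subst sum_special[where a="s+t-1" and c="-2"]) (auto simp: Me_def dd_def cls_def)
lemma S8: "(\<Sum>k\<in>{s..<n}. Me s x k (s-1)) = - 2 * real t"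
  using ts t2 by (subst sum_const'[where c="-2"]) (auto simp: Me_def dd_def cls_def)
lemma S9: "(\<Sum>k\<in>{s..<n}. Me s x k (s+t-1)) = x - 3 * (real t - 1)"
  using ts t2 by (subst sum_special[where a="s+t-1" and c="-3"]) (auto simp: Me_def dd_def cls_def)

definition "sg p = (if p < 2*(t-1) then (if even p then p div 2 else s + p div 2)
   else if p < n-3 then t + (p - 2*(t-1))
   else if p = n-3 then t-1 else if p = n-2 then s-1 else if p = n-1 then s+t-1 else p)"

definition "pinv v = (if v < t-1 then 2*v else if v = t-1 then n-3 else if v < s-1 then 2*(t-1) + (v - t)
   else if v = s-1 then n-2 else if v < s+t-1 then 2*(v-s)+1 else if v = s+t-1 then n-1 else v)"

lemma sg1: assumes "p < n" shows "sg p < n \<and> pinv (sg p) = p"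
proof -
  consider "p < 2*(t-1)" "even p" | "p < 2*(t-1)" "odd p" | "2*(t-1) \<le> p" "p < n-3" | "p = n-3" | "p = n-2" | "p = n-1"
    using assms by linarith
  then show ?thesis
  proof cases
    case 1
    then obtain k where k: "p = 2*k" by (auto elim!: evenE)
    have "k < t-1" using 1 k by linarith
    have "sg p = k" using 1 k unfolding sg_def by auto
    note this \<open>k < t-1\<close>
    then show ?thesis using k ts unfolding pinv_def by (auto; arith)
  next
    case 2
    then obtain k where k: "p = 2*k+1" by (auto elim!: oddE)
    have "k < t-1" using 2 k by linarith
    have "sg p = s+k" using 2 k unfolding sg_def by auto
    note this \<open>k < t-1\<close>
    then show ?thesis using k ts unfolding pinv_def by (auto; arith)
  next
    case 3
    have "sg p = t + (p - 2*(t-1))" using 3 unfolding sg_def by (auto; arith)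
    moreover have "t + (p - 2*(t-1)) < n" using 3 ts t2 by linarith
    ultimately show ?thesis using 3 ts t2 unfolding pinv_def by (auto; arith)
  next
    case 4 then show ?thesis using ts t2 unfolding sg_def pinv_def by (auto; arith)
  next
    case 5 then show ?thesis using ts t2 unfolding sg_def pinv_def by (auto; arith)
  next
    case 6 then show ?thesis using ts t2 unfolding sg_def pinv_def by (auto; arith)
  qed
qed

lemma sg2: assumes "v < n" shows "pinv v < n \<and> sg (pinv v) = v"
proof -
  consider "v < t-1" | "v = t-1" | "t \<le> v" "v < s-1" | "v = s-1" | "s \<le> v" "v < s+t-1" | "v = s+t-1"
    using assms ts by linarith
  then show ?thesis
  proof cases
    case 1
    then have "pinv v = 2*v" unfolding pinv_def by (auto; arith)
    then show ?thesis using 1 ts unfolding sg_def by (auto; arith)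
  next
    case 2
    then have "pinv v = n-3" unfolding pinv_def using t2 by (auto; arith)
    then show ?thesis using 2 ts t2 unfolding sg_def by (auto; arith)
  next
    case 3
    then have "pinv v = 2*(t-1) + (v - t)" unfolding pinv_def using ts t2 by (auto; arith)
    then show ?thesis using 3 ts t2 unfolding sg_def by (auto; arith)
  next
    case 4
    then have "pinv v = n-2" unfolding pinv_def using ts t2 by (auto; arith)
    then show ?thesis using 4 ts t2 unfolding sg_def by (auto; arith)
  next
    case 5
    then have "pinv v = 2*(v-s)+1" unfolding pinv_def using ts t2 by (auto; arith)
    then show ?thesis using 5 ts t2 unfolding sg_def by (auto; arith)
  next
    case 6
    then have "pinv v = n-1" unfolding pinv_def using ts t2 by (auto; arith)
    then show ?thesis using 6 ts t2 unfolding sg_def by (auto; arith)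
  qed
qed

lemma sg_perm: "sg permutes {0..<n}"
proof (rule bij_imp_permutes)
  show "bij_betw sg {0..<n} {0..<n}"
    by (rule bij_betw_byWitness[where f'=pinv]) (use sg1 sg2 in auto)
  show "sg v = v" if "v \<notin> {0..<n}" for v using that ts unfolding sg_def by auto
qed

end

definition swp :: "nat \<Rightarrow> nat \<Rightarrow> nat" where
  "swp k p = (if p < 2*k then (if even p then p+1 else p-1) else p)"

lemma swp_Suc: "swp (Suc k) = Transposition.transpose (2*k) (2*k+1) \<circ> swp k"
proof
  fix p
  show "swp (Suc k) p = (Transposition.transpose (2*k) (2*k+1) \<circ> swp k) p"
  proof (cases "p < 2*k")
    case True
    then show ?thesis unfolding swp_def by (auto simp: Transposition.transpose_def elim!: evenE oddE; presburger)
  next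
    case False
    then show ?thesis unfolding swp_def by (auto simp: Transposition.transpose_def)
  qed
qed

lemma swp_sign: "permutation (swp k) \<and> sign (swp k) = (-1)^k"
proof (induction k)
  case 0
  have "swp 0 = id" by (auto simp: swp_def)
  then show ?case by (simp add: sign_id)
next
  case (Suc k)
  have p: "permutation (Transposition.transpose (2*k) (2*k+1))" by (rule permutation_swap_id)
  let ?T = "Transposition.transpose (2*k) (2*k+1)"
  have c1: "permutation (?T \<circ> swp k)" using permutation_compose[OF p] Suc by blast
  have c2: "sign (?T \<circ> swp k) = (-1)^(Suc k)" using sign_compose[OF p] Suc by (simp add: sign_swap_id)
  show ?case unfolding swp_Suc using c1 c2 by blast
qed

lemma det_permute_cols: assumes A: "A \<in> carrier_mat n n" and p: "p permutes {0..<n}"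
  shows "det (mat n n (\<lambda>(i,j). A $$ (i, p j))) = signof p * det A"
proof -
  have e: "mat n n (\<lambda>(i,j). A $$ (i, p j)) = transpose_mat (mat n n (\<lambda>(i,j). transpose_mat A $$ (p i, j)))"
    using A p by (auto intro!: eq_matI simp: permutes_in_image)
  have "det (mat n n (\<lambda>(i,j). A $$ (i, p j))) = det (mat n n (\<lambda>(i,j). transpose_mat A $$ (p i, j)))"
    unfolding e by (rule det_transpose) auto
  also have "\<dots> = signof p * det (transpose_mat A)"
    by (rule det_permute_rows[OF _ p]) (use A in auto)
  also have "det (transpose_mat A) = det A" by (rule det_transpose[OF A])
  finally show ?thesis .
qed

context K begin

definition "pm = swp (t-1)"

lemma pm_perm: "pm permutes {0..<n}"
proof (rule bij_imp_permutes)
  have inv: "pm (pm p) = p" for p unfolding pm_def swp_def by (auto elim!: evenE oddE)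
  have lt: "pm p < n" if "p < n" for p using that ts t2 unfolding pm_def swp_def by auto
  show "bij_betw pm {0..<n} {0..<n}"
    by (rule bij_betw_byWitness[where f'=pm]) (use inv lt in auto)
  show "pm v = v" if "v \<notin> {0..<n}" for v using that ts unfolding pm_def swp_def by auto
qed

lemma sign_pm: "signof pm = ((-1)^(t-1) :: real)"
  using swp_sign[of "t-1"] unfolding pm_def by simp

lemma sign_sg_sq: "(signof sg :: real) * signof sg = 1"
  by (simp add: sign_def)

lemma delsg: assumes "a < n" "i < n" shows "del a (sg i) = del (pinv a) i"
  using sg1[OF assms(2)] sg2[OF assms(1)] unfolding del_def by metis

lemma pinv_vals: "pinv (t-1) = n-3" "pinv (s-1) = n-2" "pinv (s+t-1) = n-1"
  "k < t-1 \<Longrightarrow> pinv k = 2*k" "k < t-1 \<Longrightarrow> pinv (s+k) = 2*k+1"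
  "t \<le> c \<Longrightarrow> c < s-1 \<Longrightarrow> pinv c = 2*(t-1) + (c-t)"
  using ts t2 unfolding pinv_def by auto

lemma nonrep: assumes "p < n-3" shows "sg p < n" "sg p \<noteq> t-1" "sg p \<noteq> s-1" "sg p \<noteq> s+t-1"
proof -
  have p: "p < n" using assms by auto
  show "sg p < n" using sg1[OF p] by auto
  show "sg p \<noteq> t-1"
  proof
    assume "sg p = t-1" then have "p = n-3" using sg1[OF p] pinv_vals(1) by simp
    with assms show False by simp
  qed
  show "sg p \<noteq> s-1"
  proof
    assume "sg p = s-1" then have "p = n-2" using sg1[OF p] pinv_vals(2) by simp
    with assms show False by simp
  qed
  show "sg p \<noteq> s+t-1"
  proof
    assume "sg p = s+t-1" then have "p = n-1" using sg1[OF p] pinv_vals(3) by simp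
    with assms show False by simp
  qed
qed

lemma pm_lt: "j < n-3 \<Longrightarrow> pm j < n-3"
  using ts t2 unfolding pm_def swp_def by auto

lemma Nnonrep: assumes "i < n-3" "c < n" shows "N $$ (sg i, c) = Hf (sg i) c"
  using Nent[OF nonrep(1)[OF assms(1)] assms(2)] nonrep[OF assms(1)] by simp

lemma ZR: assumes i: "n-3 \<le> i" "i < n" and j: "j < n-3" shows "N $$ (sg i, sg (pm j)) = 0"
proof -
  have c: "sg (pm j) < n" "sg (pm j) \<noteq> t-1" "sg (pm j) \<noteq> s-1" "sg (pm j) \<noteq> s+t-1"
    using nonrep[OF pm_lt[OF j]] by auto
  have "sg i = t-1 \<or> sg i = s-1 \<or> sg i = s+t-1" using i ts t2 unfolding sg_def by auto
  moreover have "sg i < n" using sg1 i by auto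
  ultimately show ?thesis using Nent[of "sg i" "sg (pm j)"] RS0[OF c] c by auto
qed

definition "Dg j = (if j < 2*(t-1) then (if even j then 1 else -q) else x+1)"

lemma colform: assumes j: "j < n-3" and i: "i < n-3"
  shows "N $$ (sg i, sg (pm j)) =
    (if j < 2*(t-1) then (if even j then del j i - del (pinv (j div 2 + 1)) i + (x+3) * (del (j+1) i - del (pinv (s + j div 2 + 1)) i)
                          else -q * (del j i - del (pinv (s + j div 2 + 1)) i))
     else (x+1) * (del j i - del (pinv (t + (j - 2*(t-1)) + 1)) i))"
proof -
  have i': "i < n" using i by auto
  consider "j < 2*(t-1)" "even j" | "j < 2*(t-1)" "odd j" | "2*(t-1) \<le> j" by linarith
  then show ?thesis
  proof cases
    case 1
    then obtain k where k: "j = 2*k" by (auto elim!: evenE)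
    have kt: "k < t-1" using 1 k by linarith
    have pj: "pm j = 2*k+1" using 1 k unfolding pm_def swp_def by auto
    have sj: "sg (pm j) = s + k" using kt unfolding pj sg_def by auto
    have hf: "Hf u (s+k) = del k u - del (k+1) u + (x+3) * (del (s+k) u - del (s+k+1) u)" for u
      using kt ts unfolding Hf_def by auto
    show ?thesis unfolding sj Nnonrep[OF i, of "s+k"]
      using Nnonrep[OF i, of "s+k"] kt ts 1 k hf
      by (simp add: delsg i' pinv_vals)
  next
    case 2
    then obtain k where k: "j = 2*k+1" by (auto elim!: oddE)
    have kt: "k < t-1" using 2 k by linarith
    have pj: "pm j = 2*k" using 2 k unfolding pm_def swp_def by auto
    have sj: "sg (pm j) = k" using kt unfolding pj sg_def by auto
    have hf: "Hf u k = -q * (del (s+k) u - del (s+k+1) u)" for u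
      using kt ts unfolding Hf_def by auto
    show ?thesis unfolding sj
      using Nnonrep[OF i, of "k"] kt ts 2 k hf
      by (simp add: delsg i' pinv_vals)
  next
    case 3
    let ?c = "t + (j - 2*(t-1))"
    have pj: "pm j = j" using 3 unfolding pm_def swp_def by auto
    have sj: "sg (pm j) = ?c" using 3 j unfolding pj sg_def by auto
    have cr: "t \<le> ?c" "?c < s-1" using 3 j ts t2 by linarith+
    have hf: "Hf u ?c = (x+1) * (del ?c u - del (?c+1) u)" for u
      using cr ts unfolding Hf_def by auto
    show ?thesis unfolding sj
      using Nnonrep[OF i, of "?c"] cr ts 3 j hf
      by (simp add: delsg i' pinv_vals)
  qed
qed

end

context K begin

lemma PG: assumes j: "j < n-3"
  shows "j < 2*(t-1) \<Longrightarrow> even j \<Longrightarrow> j < pinv (j div 2 + 1) \<and> j < pinv (s + j div 2 + 1)"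
    and "j < 2*(t-1) \<Longrightarrow> odd j \<Longrightarrow> j < pinv (s + j div 2 + 1)"
    and "2*(t-1) \<le> j \<Longrightarrow> j < pinv (t + (j - 2*(t-1)) + 1)"
proof -
  assume a: "j < 2*(t-1)" "even j"
  then obtain k where k: "j = 2*k" by (auto elim!: evenE)
  have kt: "k < t-1" using a k by linarith
  have "pinv (k+1) = (if k+1 < t-1 then 2*(k+1) else n-3)"
    using kt ts t2 unfolding pinv_def by auto
  moreover have "pinv (s+k+1) = (if k+1 < t-1 then 2*(k+1)+1 else n-1)"
    using kt ts t2 unfolding pinv_def by auto
  ultimately show "j < pinv (j div 2 + 1) \<and> j < pinv (s + j div 2 + 1)"
    using k kt j by auto
next
  assume a: "j < 2*(t-1)" "odd j"
  then obtain k where k: "j = 2*k+1" by (auto elim!: oddE)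
  have kt: "k < t-1" using a k by linarith
  have "pinv (s+k+1) = (if k+1 < t-1 then 2*(k+1)+1 else n-1)"
    using kt ts t2 unfolding pinv_def by auto
  then show "j < pinv (s + j div 2 + 1)" using k kt j by auto
next
  assume a: "2*(t-1) \<le> j"
  let ?c = "t + (j - 2*(t-1))"
  have cr: "t \<le> ?c" "?c < s-1" using a j ts t2 by linarith+
  have "pinv (?c+1) = (if ?c+1 < s-1 then 2*(t-1) + (?c+1-t) else n-2)"
    using cr ts t2 unfolding pinv_def by auto
  moreover have "j < 2*(t-1) + (?c+1-t)" using a by linarith
  moreover have "j < n-2" using j by linarith
  ultimately show "j < pinv (?c + 1)" by (cases "?c+1 < s-1") simp_all
qed

lemma LT: assumes "i < j" "j < n-3" shows "N $$ (sg i, sg (pm j)) = 0"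
proof -
  have i: "i < n-3" using assms by auto
  show ?thesis unfolding colform[OF assms(2) i] using PG[OF assms(2)] assms
    by (auto simp: del_def)
qed

lemma DG: assumes "j < n-3" shows "N $$ (sg j, sg (pm j)) = Dg j"
  unfolding colform[OF assms assms] Dg_def using PG[OF assms] assms
  by (auto simp: del_def)

lemma detF: "det Fm = 1"
proof -
  have "det Fm = prod_list (diag_mat Fm)"
    by (rule det_lower_triangular[of n]) (use ts t2 in \<open>auto simp: Fm_def del_def\<close>)
  also have "\<dots> = (\<Prod>i=0..<n. Fm $$ (i,i))" by (simp add: prod_list_diag_prod Fm_def)
  also have "\<dots> = (\<Prod>i=0..<n. 1)" by (rule prod.cong) (use ts t2 in \<open>auto simp: Fm_def del_def\<close>)
  finally show ?thesis by simp
qed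

lemma detR: "det Rm = 1"
proof -
  have "det Rm = prod_list (diag_mat Rm)"
    by (rule det_lower_triangular[of n]) (use ts t2 in \<open>auto simp: Rm_def del_def\<close>)
  also have "\<dots> = (\<Prod>i=0..<n. Rm $$ (i,i))" by (simp add: prod_list_diag_prod Rm_def)
  also have "\<dots> = (\<Prod>i=0..<n. 1)" by (rule prod.cong) (use ts t2 in \<open>auto simp: Rm_def del_def\<close>)
  finally show ?thesis by simp
qed

lemma detN: "det N = det Mv"
proof -
  have "det N = det Fm * det (Mv * Rm)" unfolding N_def
    by (rule det_mult[of _ n]) (use carr in auto)
  also have "det (Mv * Rm) = det Mv * det Rm" by (rule det_mult) (use carr in auto)
  finally show ?thesis using detF detR by simp
qed

end

lemma prod_alt: "(\<Prod>i=0..<2*k. (if even i then 1 else c)) = (c::real)^k"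
proof (induction k)
  case 0 then show ?case by simp
next
  case (Suc k)
  have "{0..<2*Suc k} = insert (2*k+1) (insert (2*k) {0..<2*k})" by auto
  then show ?case using Suc by simp
qed

lemma rearr: assumes "(a::real) * b = e1 * e2" shows "a * (b * c * d) = c * e1 * e2 * d"
proof -
  have "a * (b * c * d) = (a * b) * c * d" by (simp add: mult.assoc)
  also have "\<dots> = (e1 * e2) * c * d" using assms by simp
  also have "\<dots> = c * e1 * e2 * d" by (simp add: ac_simps)
  finally show ?thesis .
qed

context K begin

definition "N2 = mat n n (\<lambda>(i,j). N $$ (sg i, sg (pm j)))"

lemma Ncarr: "N \<in> carrier_mat n n" unfolding N_def using carr by auto

lemma detN2: "det N2 = (-1)^(t-1) * det N"
proof -
  have p: "sg \<circ> pm permutes {0..<n}" by (rule permutes_compose[OF pm_perm sg_perm])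
  let ?N' = "mat n n (\<lambda>(i,j). N $$ (i, (sg \<circ> pm) j))"
  have d1: "det ?N' = signof (sg \<circ> pm) * det N" by (rule det_permute_cols[OF Ncarr p])
  have e: "N2 = mat n n (\<lambda>(i,j). ?N' $$ (sg i, j))"
    unfolding N2_def by (rule eq_matI) (use sg1 in auto)
  have d2: "det N2 = signof sg * det ?N'" unfolding e
    by (rule det_permute_rows[OF _ sg_perm]) auto
  have "sign (sg \<circ> pm) = sign sg * sign pm"
    by (rule sign_compose) (use permutes_imp_permutation[OF _ sg_perm] permutes_imp_permutation[OF _ pm_perm] in auto)
  then have "(signof (sg \<circ> pm) :: real) = signof sg * signof pm" by simp
  then show ?thesis unfolding d2 d1 using sign_sg_sq sign_pm
    by (metis (no_types, lifting) mult.assoc mult_1)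
qed

lemma prodDg: "(\<Prod>i=0..<n-3. Dg i) = (-q)^(t-1) * (x+1)^(s-t-1)"
proof -
  have "(\<Prod>i=0..<n-3. Dg i) = (\<Prod>i=0..<2*(t-1). Dg i) * (\<Prod>i=2*(t-1)..<n-3. Dg i)"
    by (rule prod.atLeastLessThan_concat[symmetric]) (use ts t2 in auto)
  also have "(\<Prod>i=0..<2*(t-1). Dg i) = (\<Prod>i=0..<2*(t-1). (if even i then 1 else -q))"
    by (rule prod.cong) (auto simp: Dg_def)
  also have "\<dots> = (-q)^(t-1)" by (rule prod_alt)
  also have "(\<Prod>i=2*(t-1)..<n-3. Dg i) = (\<Prod>i=2*(t-1)..<n-3. x+1)"
    by (rule prod.cong) (auto simp: Dg_def)
  also have "\<dots> = (x+1)^(n-3-2*(t-1))" by simp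
  also have "n-3-2*(t-1) = s-t-1" using ts t2 by linarith
  finally show ?thesis .
qed


lemma N2carr: "N2 \<in> carrier_mat n n" unfolding N2_def by auto

lemma N2ent: "i < n \<Longrightarrow> j < n \<Longrightarrow> N2 $$ (i,j) = N $$ (sg i, sg (pm j))"
  unfolding N2_def by auto

definition "A1 = mat (n-3) (n-3) (\<lambda>(i,j). N2 $$ (i,j))"
definition "A2 = mat (n-3) 3 (\<lambda>(i,j). N2 $$ (i,j+(n-3)))"
definition "A3 = mat 3 (n-3) (\<lambda>(i,j). N2 $$ (i+(n-3),j))"
definition "A4 = mat 3 3 (\<lambda>(i,j). N2 $$ (i+(n-3),j+(n-3)))"

lemma blocks: "N2 = four_block_mat A1 A2 A3 A4"
proof -
  have "split_block N2 (n-3) (n-3) = (A1,A2,A3,A4)"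
    using N2carr ts t2 unfolding split_block_def Let_def A1_def A2_def A3_def A4_def
    by (auto simp: case_prod_unfold)
  from split_block(5)[OF this, of 3 3] show ?thesis using N2carr ts t2 by auto
qed

lemma A3z: "A3 = 0\<^sub>m 3 (n-3)"
  unfolding A3_def by (rule eq_matI) (auto simp: N2ent ZR)

lemma detA1: "det A1 = (-q)^(t-1) * (x+1)^(s-t-1)"
proof -
  have "det A1 = prod_list (diag_mat A1)"
    by (rule det_lower_triangular[of "n-3"]) (auto simp: A1_def N2ent LT)
  also have "\<dots> = (\<Prod>i=0..<n-3. A1 $$ (i,i))" by (simp add: prod_list_diag_prod A1_def)
  also have "\<dots> = (\<Prod>i=0..<n-3. Dg i)" by (rule prod.cong) (auto simp: A1_def N2ent DG)
  finally show ?thesis using prodDg by simp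
qed

lemma detN2': "det N2 = det A1 * det A4"
  unfolding blocks
  by (rule det_four_block_mat_lower_left_zero[OF _ _ A3z]) (auto simp: A1_def A2_def A4_def)

lemma sgR: "sg (n-3) = t-1" "sg (n-2) = s-1" "sg (n-1) = s+t-1"
  using ts t2 unfolding sg_def by auto

lemma pmR: "n-3 \<le> p \<Longrightarrow> pm p = p"
  using ts t2 unfolding pm_def swp_def by auto

lemma NR: "N $$ (t-1, t-1) = x - (real t - 1)" "N $$ (t-1, s-1) = - real t" "N $$ (t-1, s+t-1) = - (2 * real t - 1)"
  "N $$ (s-1, t-1) = - (real s - real t)" "N $$ (s-1, s-1) = x - (real s - real t - 1)" "N $$ (s-1, s+t-1) = - 2 * (real s - real t)"
  "N $$ (s+t-1, t-1) = - (2 * real t - 1)" "N $$ (s+t-1, s-1) = - 2 * real t" "N $$ (s+t-1, s+t-1) = x - 3 * (real t - 1)"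
  using ts t2 by (auto simp: Nent HfR[simplified] S1[simplified] S2[simplified] S3[simplified] S4[simplified] S5[simplified] S6[simplified] S7[simplified] S8[simplified] S9[simplified])

lemma A4ent: "A4 $$ (0,0) = N $$ (t-1, t-1)" "A4 $$ (0,1) = N $$ (t-1, s-1)" "A4 $$ (0,2) = N $$ (t-1, s+t-1)"
  "A4 $$ (1,0) = N $$ (s-1, t-1)" "A4 $$ (1,1) = N $$ (s-1, s-1)" "A4 $$ (1,2) = N $$ (s-1, s+t-1)"
  "A4 $$ (2,0) = N $$ (s+t-1, t-1)" "A4 $$ (2,1) = N $$ (s+t-1, s-1)" "A4 $$ (2,2) = N $$ (s+t-1, s+t-1)"
proof -
  have a: "n-3+1 = n-2" "n-3+2 = n-1" using ts t2 by auto
  show "A4 $$ (0,0) = N $$ (t-1, t-1)" unfolding A4_def using ts t2 by (simp add: N2ent pmR sgR sgR[simplified])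
  show "A4 $$ (0,1) = N $$ (t-1, s-1)" unfolding A4_def using ts t2 a by (simp add: N2ent pmR sgR sgR[simplified])
  show "A4 $$ (0,2) = N $$ (t-1, s+t-1)" unfolding A4_def using ts t2 a by (simp add: N2ent pmR sgR sgR[simplified])
  show "A4 $$ (1,0) = N $$ (s-1, t-1)" unfolding A4_def using ts t2 a by (simp add: N2ent pmR sgR sgR[simplified])
  show "A4 $$ (1,1) = N $$ (s-1, s-1)" unfolding A4_def using ts t2 a by (simp add: N2ent pmR sgR sgR[simplified])
  show "A4 $$ (1,2) = N $$ (s-1, s+t-1)" unfolding A4_def using ts t2 a by (simp add: N2ent pmR sgR sgR[simplified])
  show "A4 $$ (2,0) = N $$ (s+t-1, t-1)" unfolding A4_def using ts t2 a by (simp add: N2ent pmR sgR sgR[simplified])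
  show "A4 $$ (2,1) = N $$ (s+t-1, s-1)" unfolding A4_def using ts t2 a by (simp add: N2ent pmR sgR sgR[simplified])
  show "A4 $$ (2,2) = N $$ (s+t-1, s+t-1)" unfolding A4_def using ts t2 a by (simp add: N2ent pmR sgR sgR[simplified])
qed

lemma detA4: "det A4 = x ^ 3 + (5 - real s - 3 * real t) * x ^ 2
                + (6 - 4 * real s - 2 * real t - real s * real t) * x
                + 2 - 2 * real s - real s * real t"
proof -
  have "det A4 = A4 $$ (0,0) * (A4 $$ (1,1) * A4 $$ (2,2) - A4 $$ (1,2) * A4 $$ (2,1))
     - A4 $$ (1,0) * (A4 $$ (0,1) * A4 $$ (2,2) - A4 $$ (0,2) * A4 $$ (2,1))
     + A4 $$ (2,0) * (A4 $$ (0,1) * A4 $$ (1,2) - A4 $$ (0,2) * A4 $$ (1,1))"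
    by (rule det3) (simp add: A4_def)
  also have "\<dots> = x ^ 3 + (5 - real s - 3 * real t) * x ^ 2
                + (6 - 4 * real s - 2 * real t - real s * real t) * x
                + 2 - 2 * real s - real s * real t"
    unfolding A4ent NR by (simp add: algebra_simps power2_eq_square power3_eq_cube)
  finally show ?thesis .
qed

lemma detMv: "det Mv = (x + 1) ^ (s - t - 1) * (x + 2 - sqrt 2) ^ (t - 1)
             * (x + 2 + sqrt 2) ^ (t - 1)
             * (x ^ 3 + (5 - real s - 3 * real t) * x ^ 2
                + (6 - 4 * real s - 2 * real t - real s * real t) * x
                + 2 - 2 * real s - real s * real t)"
proof -
  have h: "(-1)^(t-1) * det Mv = det A1 * det A4" using detN2 detN2' detN by simp
  have c2: "(-1::real)^(t-1) * (-1)^(t-1) = 1" by (simp add: power_mult_distrib[symmetric])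
  have "det Mv = ((-1)^(t-1) * (-1)^(t-1)) * det Mv" using c2 by simp
  also have "\<dots> = (-1)^(t-1) * ((-1)^(t-1) * det Mv)" by (simp only: mult.assoc)
  also have "\<dots> = (-1)^(t-1) * (det A1 * det A4)" using h by simp
  finally have e: "det Mv = (-1)^(t-1) * (det A1 * det A4)" .
  have qq: "(x + 2 - sqrt 2) * (x + 2 + sqrt 2) = q" by (simp add: algebra_simps power2_eq_square)
  have P: "(-1::real)^(t-1) * (-q)^(t-1) = (x + 2 - sqrt 2) ^ (t - 1) * (x + 2 + sqrt 2) ^ (t - 1)"
  proof -
    have h1: "(-1::real)^(t-1) * (-q)^(t-1) = ((-1) * (-q))^(t-1)" by (simp only: power_mult_distrib)
    have h2: "(-1::real) * (-q) = (x + 2 - sqrt 2) * (x + 2 + sqrt 2)" using qq by simp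
    have "(-1::real)^(t-1) * (-q)^(t-1) = ((x + 2 - sqrt 2) * (x + 2 + sqrt 2))^(t-1)" using h1 h2 by metis
    then show ?thesis by (simp only: power_mult_distrib)
  qed
  show ?thesis unfolding e detA1 detA4 by (rule rearr[OF P])
qed

end

locale K0 =
  fixes t :: nat and x :: real
  assumes t2: "2 \<le> t"
begin

abbreviation "n \<equiv> t + t"
abbreviation "q \<equiv> x^2 + 4*x + 2"

definition "Mv = mat n n (\<lambda>(i,j). Me t x i j)"

definition "Fm = mat n n (\<lambda>(i,j). if i = t-1 then (if j < t then 1 else 0)
   else if i = t+t-1 then (if t \<le> j then 1 else 0) else del i j)"

definition "Rm = mat n n (\<lambda>(i,j). if j < t-1 then del j i - del (j+1) i - (x+1)*(del (t+j) i - del (t+j+1) i)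
   else if t \<le> j \<and> j < t+t-1 then del j i - del (j+1) i else del j i)"

lemma L1: assumes "i < n" "c < t - 1"
  shows "Me t x i c - Me t x i (c+1) - (x+1)*(Me t x i (t+c) - Me t x i (t+c+1)) = - q * (del (t+c) i - del (t+c+1) i)"
  using assms unfolding Me_def dd_def cls_def del_def by (auto simp: algebra_simps power2_eq_square)

lemma L3: assumes "i < n" "t \<le> c" "c < t + t - 1"
  shows "Me t x i c - Me t x i (c+1) = del (c-t) i - del (c-t+1) i + (x+3) * (del c i - del (c+1) i)"
proof -
  have e: "Suc c - t = Suc (c - t)" using assms by auto
  show ?thesis using assms e unfolding Me_def dd_def cls_def del_def
    apply (auto simp: algebra_simps)
    apply linarith
    done
qed

lemma carr: "Mv \<in> carrier_mat n n" "Fm \<in> carrier_mat n n" "Rm \<in> carrier_mat n n"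
  by (auto simp: Mv_def Fm_def Rm_def)

definition "Hf i c = (if c < t-1 then -q*(del (t+c) i - del (t+c+1) i)
   else if t \<le> c \<and> c < t+t-1 then del (c-t) i - del (c-t+1) i + (x+3)*(del c i - del (c+1) i)
   else Me t x i c)"

lemma H: assumes i: "i < n" and c: "c < n"
  shows "(Mv * Rm) $$ (i,c) = Hf i c"
proof -
  have e: "(Mv*Rm)$$(i,c) = (\<Sum>w<n. Me t x i w * Rm $$ (w,c))"
    using i c by (simp add: index_mult_mat scalar_prod_def Mv_def Rm_def atLeast0LessThan)
  have R: "Rm $$ (w,c) = (if c < t-1 then del c w - del (c+1) w - (x+1)*(del (t+c) w - del (t+c+1) w)
   else if t \<le> c \<and> c < t+t-1 then del c w - del (c+1) w else del c w)" if "w < n" for w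
    using that c by (simp add: Rm_def)
  have e2: "(Mv*Rm)$$(i,c) = (if c < t-1 then Me t x i c - Me t x i (c+1) - (x+1)*(Me t x i (t+c) - Me t x i (t+c+1))
   else if t \<le> c \<and> c < t+t-1 then Me t x i c - Me t x i (c+1) else Me t x i c)"
  proof -
    consider "c < t-1" | "t \<le> c \<and> c < t+t-1" | "\<not> c < t-1" "\<not> (t \<le> c \<and> c < t+t-1)" by blast
    then show ?thesis
    proof cases
      case 1
      have "(Mv*Rm)$$(i,c) = (\<Sum>w<n. Me t x i w * (del c w - del (c+1) w - (x+1)*(del (t+c) w - del (t+c+1) w)))"
        unfolding e by (rule sum.cong) (use 1 in \<open>auto simp: R\<close>)
      also have "\<dots> = Me t x i c - Me t x i (c+1) - (x+1)*(Me t x i (t+c) - Me t x i (t+c+1))"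
        by (rule sumB) (use 1 in auto)
      finally show ?thesis using 1 by simp
    next
      case 2
      have "(Mv*Rm)$$(i,c) = (\<Sum>w<n. Me t x i w * (del c w - del (c+1) w))"
        unfolding e by (rule sum.cong) (use 2 in \<open>auto simp: R\<close>)
      also have "\<dots> = Me t x i c - Me t x i (c+1)"
        by (rule sumA) (use 2 in auto)
      finally show ?thesis using 2 by auto
    next
      case 3
      have "(Mv*Rm)$$(i,c) = (\<Sum>w<n. Me t x i w * del c w)"
        unfolding e by (rule sum.cong) (use 3 in \<open>auto simp: R\<close>)
      also have "\<dots> = Me t x i c"
        by (rule sum_del) (use c in auto)
      finally show ?thesis using 3 by auto
    qed
  qed
  show ?thesis unfolding e2 Hf_def using L1[OF i] L3[OF i] by auto
qed

lemma FX: assumes X: "X \<in> carrier_mat n n" and u: "u < n" and c: "c < n"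
  shows "(Fm * X) $$ (u,c) = (if u = t-1 then (\<Sum>k<t. X$$(k,c))
     else if u = t+t-1 then (\<Sum>k\<in>{t..<n}. X$$(k,c)) else X$$(u,c))"
proof -
  have e: "(Fm*X)$$(u,c) = (\<Sum>k\<in>{0..<n}. Fm$$(u,k) * X$$(k,c))"
    using X u c by (simp add: index_mult_mat scalar_prod_def Fm_def)
  consider "u = t-1" | "u = t+t-1" | "u \<noteq> t-1" "u \<noteq> t+t-1" by blast
  then show ?thesis
  proof cases
    case 1
    have "(Fm*X)$$(u,c) = (\<Sum>k\<in>{0..<n}. (if k < t then 1 else 0) * X$$(k,c))"
      unfolding e by (rule sum.cong) (use 1 t2 u in \<open>auto simp: Fm_def\<close>)
    also have "\<dots> = (\<Sum>k\<in>{k\<in>{0..<n}. k < t}. X$$(k,c))" by (rule sum_ind) auto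
    also have "{k\<in>{0..<n}. k < t} = {..<t}" by auto
    finally show ?thesis using 1 by simp
  next
    case 2
    have "(Fm*X)$$(u,c) = (\<Sum>k\<in>{0..<n}. (if t \<le> k then 1 else 0) * X$$(k,c))"
      unfolding e by (rule sum.cong) (use 2 t2 u in \<open>auto simp: Fm_def\<close>)
    also have "\<dots> = (\<Sum>k\<in>{k\<in>{0..<n}. t \<le> k}. X$$(k,c))" by (rule sum_ind) auto
    also have "{k\<in>{0..<n}. t \<le> k} = {t..<n}" by auto
    finally show ?thesis using 2 t2 by simp
  next
    case 3
    have "(Fm*X)$$(u,c) = (\<Sum>k<n. X$$(k,c) * del u k)"
      unfolding e atLeast0LessThan by (rule sum.cong) (use 3 u in \<open>auto simp: Fm_def mult.commute\<close>)
    also have "\<dots> = X$$(u,c)" by (rule sum_del[OF u])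
    finally show ?thesis using 3 by simp
  qed
qed

definition "N = Fm * (Mv * Rm)"

lemma Nent: assumes u: "u < n" and c: "c < n"
  shows "N $$ (u,c) = (if u = t-1 then (\<Sum>k<t. Hf k c)
     else if u = t+t-1 then (\<Sum>k\<in>{t..<n}. Hf k c) else Hf u c)"
proof -
  have X: "Mv * Rm \<in> carrier_mat n n" using carr by auto
  show ?thesis unfolding N_def FX[OF X u c] using u c
    by (auto simp: H intro!: sum.cong)
qed

lemma RS0: assumes c: "c < n" "c \<noteq> t-1" "c \<noteq> t+t-1"
  shows "(\<Sum>k<t. Hf k c) = 0 \<and> (\<Sum>k\<in>{t..<n}. Hf k c) = 0"
proof -
  consider "c < t-1" | "t \<le> c \<and> c < t+t-1" using c by linarith
  then show ?thesis
  proof cases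
    case 1
    then have h: "Hf k c = -q * del (t+c) k + q * del (t+c+1) k" for k by (auto simp: Hf_def algebra_simps)
    have "Suc c < t" using 1 by linarith
    show ?thesis unfolding h using 1 t2 \<open>Suc c < t\<close> by (simp add: sum.distrib sum_distrib_left[symmetric] sum_del_set)
  next
    case 2
    then have h: "Hf k c = del (c-t) k - del (c-t+1) k + (x+3) * del c k - (x+3) * del (c+1) k" for k by (auto simp: Hf_def algebra_simps)
    have "Suc c < n" "Suc (c - t) < t" using 2 by linarith+
    show ?thesis unfolding h using 2 t2 \<open>Suc c < n\<close> \<open>Suc (c - t) < t\<close> by (simp add: sum_subtractf sum.distrib sum_distrib_left[symmetric] sum_del_set)
  qed
qed

lemma HfR: "Hf k (t-1) = Me t x k (t-1)" "Hf k (t+t-1) = Me t x k (t+t-1)"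
  using t2 by (auto simp: Hf_def)

lemma S1: "(\<Sum>k<t. Me t x k (t-1)) = x - (real t - 1)"
  using t2 by (subst sum_special[where a="t-1" and c="-1"]) (auto simp: Me_def dd_def cls_def)
lemma S3: "(\<Sum>k<t. Me t x k (t+t-1)) = - (2 * real t - 1)"
  using t2 by (subst sum_special[where a="t-1" and c="-2"]) (auto simp: Me_def dd_def cls_def)
lemma S7: "(\<Sum>k\<in>{t..<n}. Me t x k (t-1)) = - (2 * real t - 1)"
  using t2 by (subst sum_special[where a="t+t-1" and c="-2"]) (auto simp: Me_def dd_def cls_def)
lemma S9: "(\<Sum>k\<in>{t..<n}. Me t x k (t+t-1)) = x - 3 * (real t - 1)"
  using t2 by (subst sum_special[where a="t+t-1" and c="-3"]) (auto simp: Me_def dd_def cls_def)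

definition "sg p = (if p < 2*(t-1) then (if even p then p div 2 else t + p div 2)
   else if p = n-2 then t-1 else if p = n-1 then t+t-1 else p)"

definition "pinv v = (if v < t-1 then 2*v else if v = t-1 then n-2
   else if v < t+t-1 then 2*(v-t)+1 else if v = t+t-1 then n-1 else v)"

lemma sg1: assumes "p < n" shows "sg p < n \<and> pinv (sg p) = p"
proof -
  consider "p < 2*(t-1)" "even p" | "p < 2*(t-1)" "odd p" | "p = n-2" | "p = n-1"
    using assms t2 by linarith
  then show ?thesis
  proof cases
    case 1
    then obtain k where k: "p = 2*k" by (auto elim!: evenE)
    have "k < t-1" using 1 k by linarith
    have "sg p = k" using 1 k unfolding sg_def by auto
    note this \<open>k < t-1\<close>
    then show ?thesis using k unfolding pinv_def by (auto; arith)
  next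
    case 2
    then obtain k where k: "p = 2*k+1" by (auto elim!: oddE)
    have "k < t-1" using 2 k by linarith
    have "sg p = t+k" using 2 k unfolding sg_def by auto
    note this \<open>k < t-1\<close>
    then show ?thesis using k unfolding pinv_def by (auto; arith)
  next
    case 3 then show ?thesis using t2 unfolding sg_def pinv_def by (auto; arith)
  next
    case 4 then show ?thesis using t2 unfolding sg_def pinv_def by (auto; arith)
  qed
qed

lemma sg2: assumes "v < n" shows "pinv v < n \<and> sg (pinv v) = v"
proof -
  consider "v < t-1" | "v = t-1" | "t \<le> v" "v < t+t-1" | "v = t+t-1"
    using assms by linarith
  then show ?thesis
  proof cases
    case 1
    then have "pinv v = 2*v" unfolding pinv_def by auto
    then show ?thesis using 1 unfolding sg_def by (auto; arith)
  next
    case 2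
    then have "pinv v = n-2" unfolding pinv_def using t2 by (auto; arith)
    then show ?thesis using 2 t2 unfolding sg_def by (auto; arith)
  next
    case 3
    then have "pinv v = 2*(v-t)+1" unfolding pinv_def using t2 by (auto; arith)
    then show ?thesis using 3 t2 unfolding sg_def by (auto; arith)
  next
    case 4
    then have "pinv v = n-1" unfolding pinv_def using t2 by (auto; arith)
    then show ?thesis using 4 t2 unfolding sg_def by (auto; arith)
  qed
qed

lemma sg_perm: "sg permutes {0..<n}"
proof (rule bij_imp_permutes)
  show "bij_betw sg {0..<n} {0..<n}"
    by (rule bij_betw_byWitness[where f'=pinv]) (use sg1 sg2 in auto)
  show "sg v = v" if "v \<notin> {0..<n}" for v using that t2 unfolding sg_def by auto
qed

end

context K0 begin

definition "pm = swp (t-1)"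

lemma pm_perm: "pm permutes {0..<n}"
proof (rule bij_imp_permutes)
  have inv: "pm (pm p) = p" for p unfolding pm_def swp_def by (auto elim!: evenE oddE)
  have lt: "pm p < n" if "p < n" for p using that t2 unfolding pm_def swp_def by auto
  show "bij_betw pm {0..<n} {0..<n}"
    by (rule bij_betw_byWitness[where f'=pm]) (use inv lt in auto)
  show "pm v = v" if "v \<notin> {0..<n}" for v using that t2 unfolding pm_def swp_def by auto
qed

lemma sign_pm: "signof pm = ((-1)^(t-1) :: real)"
  using swp_sign[of "t-1"] unfolding pm_def by simp

lemma sign_sg_sq: "(signof sg :: real) * signof sg = 1"
  by (simp add: sign_def)

lemma delsg: assumes "a < n" "i < n" shows "del a (sg i) = del (pinv a) i"
  using sg1[OF assms(2)] sg2[OF assms(1)] unfolding del_def by metis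

lemma pinv_vals: "pinv (t-1) = n-2" "pinv (t+t-1) = n-1"
  "k < t-1 \<Longrightarrow> pinv k = 2*k" "k < t-1 \<Longrightarrow> pinv (t+k) = 2*k+1"
  using t2 unfolding pinv_def by auto

lemma nonrep: assumes "p < n-2" shows "sg p < n" "sg p \<noteq> t-1" "sg p \<noteq> t+t-1"
proof -
  have p: "p < n" using assms by auto
  show "sg p < n" using sg1[OF p] by auto
  show "sg p \<noteq> t-1"
  proof
    assume "sg p = t-1" then have "p = n-2" using sg1[OF p] pinv_vals(1) by simp
    with assms show False by simp
  qed
  show "sg p \<noteq> t+t-1"
  proof
    assume "sg p = t+t-1" then have "p = n-1" using sg1[OF p] pinv_vals(2) by simp
    with assms show False by simp
  qed
qed

lemma pm_lt: "j < n-2 \<Longrightarrow> pm j < n-2"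
  using t2 unfolding pm_def swp_def by auto

lemma Nnonrep: assumes "i < n-2" "c < n" shows "N $$ (sg i, c) = Hf (sg i) c"
  using Nent[OF nonrep(1)[OF assms(1)] assms(2)] nonrep[OF assms(1)] by simp

lemma ZR: assumes i: "n-2 \<le> i" "i < n" and j: "j < n-2" shows "N $$ (sg i, sg (pm j)) = 0"
proof -
  have c: "sg (pm j) < n" "sg (pm j) \<noteq> t-1" "sg (pm j) \<noteq> t+t-1"
    using nonrep[OF pm_lt[OF j]] by auto
  have "sg i = t-1 \<or> sg i = t+t-1" using i t2 unfolding sg_def by auto
  moreover have "sg i < n" using sg1 i by auto
  ultimately show ?thesis using Nent[of "sg i" "sg (pm j)"] RS0[OF c] c by auto
qed

definition "Dg j = (if even j then 1 else -q)"

lemma colform: assumes j: "j < n-2" and i: "i < n-2"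
  shows "N $$ (sg i, sg (pm j)) =
    (if even j then del j i - del (pinv (j div 2 + 1)) i + (x+3) * (del (j+1) i - del (pinv (t + j div 2 + 1)) i)
                          else -q * (del j i - del (pinv (t + j div 2 + 1)) i))"
proof -
  have i': "i < n" using i by auto
  have j2: "j < 2*(t-1)" using j by linarith
  consider "even j" | "odd j" by blast
  then show ?thesis
  proof cases
    case 1
    then obtain k where k: "j = 2*k" by (auto elim!: evenE)
    have kt: "k < t-1" using j2 k by linarith
    have pj: "pm j = 2*k+1" using j2 k unfolding pm_def swp_def by auto
    have sj: "sg (pm j) = t + k" using kt unfolding pj sg_def by auto
    have hf: "Hf u (t+k) = del k u - del (k+1) u + (x+3) * (del (t+k) u - del (t+k+1) u)" for u
      using kt unfolding Hf_def by auto
    show ?thesis unfolding sj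
      using Nnonrep[OF i, of "t+k"] kt 1 k hf
      by (simp add: delsg i' pinv_vals)
  next
    case 2
    then obtain k where k: "j = 2*k+1" by (auto elim!: oddE)
    have kt: "k < t-1" using j2 k by linarith
    have pj: "pm j = 2*k" using j2 k unfolding pm_def swp_def by auto
    have sj: "sg (pm j) = k" using kt unfolding pj sg_def by auto
    have hf: "Hf u k = -q * (del (t+k) u - del (t+k+1) u)" for u
      using kt unfolding Hf_def by auto
    show ?thesis unfolding sj
      using Nnonrep[OF i, of "k"] kt 2 k hf
      by (simp add: delsg i' pinv_vals)
  qed
qed

lemma PG: assumes j: "j < n-2"
  shows "even j \<Longrightarrow> j < pinv (j div 2 + 1) \<and> j < pinv (t + j div 2 + 1)"
    and "odd j \<Longrightarrow> j < pinv (t + j div 2 + 1)"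
proof -
  assume a: "even j"
  then obtain k where k: "j = 2*k" by (auto elim!: evenE)
  have kt: "k < t-1" using j k by linarith
  have "pinv (k+1) = (if k+1 < t-1 then 2*(k+1) else n-2)"
    using kt t2 unfolding pinv_def by auto
  moreover have "pinv (t+k+1) = (if k+1 < t-1 then 2*(k+1)+1 else n-1)"
    using kt t2 unfolding pinv_def by auto
  ultimately show "j < pinv (j div 2 + 1) \<and> j < pinv (t + j div 2 + 1)"
    using k kt j by auto
next
  assume a: "odd j"
  then obtain k where k: "j = 2*k+1" by (auto elim!: oddE)
  have kt: "k < t-1" using j k by linarith
  have "pinv (t+k+1) = (if k+1 < t-1 then 2*(k+1)+1 else n-1)"
    using kt t2 unfolding pinv_def by auto
  then show "j < pinv (t + j div 2 + 1)" using k kt j by auto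
qed

lemma LT: assumes "i < j" "j < n-2" shows "N $$ (sg i, sg (pm j)) = 0"
proof -
  have i: "i < n-2" using assms by auto
  show ?thesis unfolding colform[OF assms(2) i] using PG[OF assms(2)] assms
    by (auto simp: del_def)
qed

lemma DG: assumes "j < n-2" shows "N $$ (sg j, sg (pm j)) = Dg j"
  unfolding colform[OF assms assms] Dg_def using PG[OF assms] assms
  by (auto simp: del_def)

lemma detF: "det Fm = 1"
proof -
  have "det Fm = prod_list (diag_mat Fm)"
    by (rule det_lower_triangular[of n]) (use t2 in \<open>auto simp: Fm_def del_def\<close>)
  also have "\<dots> = (\<Prod>i=0..<n. Fm $$ (i,i))" by (simp add: prod_list_diag_prod Fm_def)
  also have "\<dots> = (\<Prod>i=0..<n. 1)" by (rule prod.cong) (use t2 in \<open>auto simp: Fm_def del_def\<close>)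
  finally show ?thesis by simp
qed

lemma detR: "det Rm = 1"
proof -
  have "det Rm = prod_list (diag_mat Rm)"
    by (rule det_lower_triangular[of n]) (use t2 in \<open>auto simp: Rm_def del_def\<close>)
  also have "\<dots> = (\<Prod>i=0..<n. Rm $$ (i,i))" by (simp add: prod_list_diag_prod Rm_def)
  also have "\<dots> = (\<Prod>i=0..<n. 1)" by (rule prod.cong) (use t2 in \<open>auto simp: Rm_def del_def\<close>)
  finally show ?thesis by simp
qed

lemma detN: "det N = det Mv"
proof -
  have "det N = det Fm * det (Mv * Rm)" unfolding N_def
    by (rule det_mult[of _ n]) (use carr in auto)
  also have "det (Mv * Rm) = det Mv * det Rm" by (rule det_mult) (use carr in auto)
  finally show ?thesis using detF detR by simp
qed

end

context K0 begin

definition "N2 = mat n n (\<lambda>(i,j). N $$ (sg i, sg (pm j)))"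

lemma Ncarr: "N \<in> carrier_mat n n" unfolding N_def using carr by auto

lemma detN2: "det N2 = (-1)^(t-1) * det N"
proof -
  have p: "sg \<circ> pm permutes {0..<n}" by (rule permutes_compose[OF pm_perm sg_perm])
  let ?N' = "mat n n (\<lambda>(i,j). N $$ (i, (sg \<circ> pm) j))"
  have d1: "det ?N' = signof (sg \<circ> pm) * det N" by (rule det_permute_cols[OF Ncarr p])
  have e: "N2 = mat n n (\<lambda>(i,j). ?N' $$ (sg i, j))"
    unfolding N2_def by (rule eq_matI) (use sg1 in auto)
  have d2: "det N2 = signof sg * det ?N'" unfolding e
    by (rule det_permute_rows[OF _ sg_perm]) auto
  have "sign (sg \<circ> pm) = sign sg * sign pm"
    by (rule sign_compose) (use permutes_imp_permutation[OF _ sg_perm] permutes_imp_permutation[OF _ pm_perm] in auto)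
  then have "(signof (sg \<circ> pm) :: real) = signof sg * signof pm" by simp
  then show ?thesis unfolding d2 d1 using sign_sg_sq sign_pm
    by (metis (no_types, lifting) mult.assoc mult_1)
qed

lemma prodDg: "(\<Prod>i=0..<n-2. Dg i) = (-q)^(t-1)"
proof -
  have "n - 2 = 2*(t-1)" using t2 by auto
  then show ?thesis unfolding Dg_def using prod_alt[where k="t-1" and c="-q"] by simp
qed

lemma N2carr: "N2 \<in> carrier_mat n n" unfolding N2_def by auto

lemma N2ent: "i < n \<Longrightarrow> j < n \<Longrightarrow> N2 $$ (i,j) = N $$ (sg i, sg (pm j))"
  unfolding N2_def by auto

definition "A1 = mat (n-2) (n-2) (\<lambda>(i,j). N2 $$ (i,j))"
definition "A2 = mat (n-2) 2 (\<lambda>(i,j). N2 $$ (i,j+(n-2)))"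
definition "A3 = mat 2 (n-2) (\<lambda>(i,j). N2 $$ (i+(n-2),j))"
definition "A4 = mat 2 2 (\<lambda>(i,j). N2 $$ (i+(n-2),j+(n-2)))"

lemma blocks: "N2 = four_block_mat A1 A2 A3 A4"
proof -
  have "split_block N2 (n-2) (n-2) = (A1,A2,A3,A4)"
    using N2carr t2 unfolding split_block_def Let_def A1_def A2_def A3_def A4_def
    by (auto simp: case_prod_unfold)
  from split_block(5)[OF this, of 2 2] show ?thesis using N2carr t2 by auto
qed

lemma A3z: "A3 = 0\<^sub>m 2 (n-2)"
  unfolding A3_def by (rule eq_matI) (auto simp: N2ent ZR)

lemma detA1: "det A1 = (-q)^(t-1)"
proof -
  have "det A1 = prod_list (diag_mat A1)"
    by (rule det_lower_triangular[of "n-2"]) (auto simp: A1_def N2ent LT)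
  also have "\<dots> = (\<Prod>i=0..<n-2. A1 $$ (i,i))" by (simp add: prod_list_diag_prod A1_def)
  also have "\<dots> = (\<Prod>i=0..<n-2. Dg i)" by (rule prod.cong) (auto simp: A1_def N2ent DG)
  finally show ?thesis using prodDg by simp
qed

lemma detN2': "det N2 = det A1 * det A4"
  unfolding blocks
  by (rule det_four_block_mat_lower_left_zero[OF _ _ A3z]) (auto simp: A1_def A2_def A4_def)

lemma sgR: "sg (n-2) = t-1" "sg (n-1) = t+t-1"
  using t2 unfolding sg_def by auto

lemma pmR: "n-2 \<le> p \<Longrightarrow> pm p = p"
  using t2 unfolding pm_def swp_def by auto

lemma NR: "N $$ (t-1, t-1) = x - (real t - 1)" "N $$ (t-1, t+t-1) = - (2 * real t - 1)"
  "N $$ (t+t-1, t-1) = - (2 * real t - 1)" "N $$ (t+t-1, t+t-1) = x - 3 * (real t - 1)"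
  using t2 by (auto simp: Nent HfR[simplified] S1[simplified] S3[simplified] S7[simplified] S9[simplified])

lemma A4ent: "A4 $$ (0,0) = N $$ (t-1, t-1)" "A4 $$ (0,1) = N $$ (t-1, t+t-1)"
  "A4 $$ (1,0) = N $$ (t+t-1, t-1)" "A4 $$ (1,1) = N $$ (t+t-1, t+t-1)"
proof -
  have a: "n-2+1 = n-1" using t2 by auto
  show "A4 $$ (0,0) = N $$ (t-1, t-1)" unfolding A4_def using t2 by (simp add: N2ent pmR sgR sgR[simplified])
  show "A4 $$ (0,1) = N $$ (t-1, t+t-1)" unfolding A4_def using t2 a by (simp add: N2ent pmR sgR sgR[simplified])
  show "A4 $$ (1,0) = N $$ (t+t-1, t-1)" unfolding A4_def using t2 a by (simp add: N2ent pmR sgR sgR[simplified])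
  show "A4 $$ (1,1) = N $$ (t+t-1, t+t-1)" unfolding A4_def using t2 a by (simp add: N2ent pmR sgR sgR[simplified])
qed

lemma detA4: "det A4 = x ^ 2 + (4 - 4 * real t) * x + 2 - 2 * real t - (real t) ^ 2"
proof -
  have "det A4 = A4 $$ (0,0) * A4 $$ (1,1) - A4 $$ (0,1) * A4 $$ (1,0)"
    by (rule det2) (simp add: A4_def)
  also have "\<dots> = x ^ 2 + (4 - 4 * real t) * x + 2 - 2 * real t - (real t) ^ 2"
    unfolding A4ent NR by (simp add: algebra_simps power2_eq_square)
  finally show ?thesis .
qed

lemma detMv: "det Mv = (x + 2 - sqrt 2) ^ (t - 1) * (x + 2 + sqrt 2) ^ (t - 1)
             * (x ^ 2 + (4 - 4 * real t) * x + 2 - 2 * real t - (real t) ^ 2)"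
proof -
  have h: "(-1)^(t-1) * det Mv = det A1 * det A4" using detN2 detN2' detN by simp
  have c2: "(-1::real)^(t-1) * (-1)^(t-1) = 1" by (simp add: power_mult_distrib[symmetric])
  have "det Mv = ((-1)^(t-1) * (-1)^(t-1)) * det Mv" using c2 by simp
  also have "\<dots> = (-1)^(t-1) * ((-1)^(t-1) * det Mv)" by (simp only: mult.assoc)
  also have "\<dots> = (-1)^(t-1) * (det A1 * det A4)" using h by simp
  finally have e: "det Mv = (-1)^(t-1) * (det A1 * det A4)" .
  have qq: "(x + 2 - sqrt 2) * (x + 2 + sqrt 2) = q" by (simp add: algebra_simps power2_eq_square)
  have P: "(-1::real)^(t-1) * (-q)^(t-1) = (x + 2 - sqrt 2) ^ (t - 1) * (x + 2 + sqrt 2) ^ (t - 1)"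
  proof -
    have h1: "(-1::real)^(t-1) * (-q)^(t-1) = ((-1) * (-q))^(t-1)" by (simp only: power_mult_distrib)
    have h2: "(-1::real) * (-q) = (x + 2 - sqrt 2) * (x + 2 + sqrt 2)" using qq by simp
    have "(-1::real)^(t-1) * (-q)^(t-1) = ((x + 2 - sqrt 2) * (x + 2 + sqrt 2))^(t-1)" using h1 h2 by metis
    then show ?thesis by (simp only: power_mult_distrib)
  qed
  show ?thesis unfolding e detA1 detA4 using P by (simp only: mult.assoc[symmetric])
qed

end

theorem lemma3p1:
  fixes s t :: nat and x :: real
  assumes "2 \<le> t" and "t \<le> s"
  shows "(s \<ge> t + 1 \<longrightarrow>
           PD_Kst s t x = (x + 1) ^ (s - t - 1) * (x + 2 - sqrt 2) ^ (t - 1)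
             * (x + 2 + sqrt 2) ^ (t - 1)
             * (x ^ 3 + (5 - real s - 3 * real t) * x ^ 2
                + (6 - 4 * real s - 2 * real t - real s * real t) * x
                + 2 - 2 * real s - real s * real t)) \<and>
         (s = t \<longrightarrow>
           PD_Kst s t x = (x + 2 - sqrt 2) ^ (t - 1) * (x + 2 + sqrt 2) ^ (t - 1)
             * (x ^ 2 + (4 - 4 * real t) * x + 2 - 2 * real t - (real t) ^ 2))"
proof (intro conjI impI)
  assume "t + 1 \<le> s"
  then interpret K s t x using assms by unfold_locales auto
  show "PD_Kst s t x = (x + 1) ^ (s - t - 1) * (x + 2 - sqrt 2) ^ (t - 1)
             * (x + 2 + sqrt 2) ^ (t - 1)
             * (x ^ 3 + (5 - real s - 3 * real t) * x ^ 2
                + (6 - 4 * real s - 2 * real t - real s * real t) * x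
                + 2 - 2 * real s - real s * real t)"
    using PD_eq[OF assms(2), of x] detMv unfolding Mv_def by simp
next
  assume st: "s = t"
  interpret K0 t x using assms by unfold_locales auto
  show "PD_Kst s t x = (x + 2 - sqrt 2) ^ (t - 1) * (x + 2 + sqrt 2) ^ (t - 1)
             * (x ^ 2 + (4 - 4 * real t) * x + 2 - 2 * real t - (real t) ^ 2)"
    using PD_eq[OF assms(2), of x] detMv unfolding Mv_def st by simp
qed

end
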